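(* Let $n\ge2$ and $\rho\in\mathbb{R}\setminus\{-1,0,1\}$. Then $K_n(\rho)=\left[\rho^{|j-k|}\right]_{j,k=1}^n$ has $n$ distinct real eigenvalues. *)

theory Defs
  imports "Jordan_Normal_Form.Char_Poly"
begin

text \<open>The Kac-Murdock-Szego matrix K_n(rho) with entries rho^|j-k|, indexed 0..n-1
  (a shift of the paper's 1..n indexing, which leaves |j-k| unchanged).\<close>
definition kms_matrix :: "nat \<Rightarrow> real \<Rightarrow> real mat" where
  "kms_matrix n \<rho> = mat n n (\<lambda>(j, k). \<rho> ^ (if j \<le> k then k - j else j - k))"

end

theory Submission
  imports Defs
begin


fun pp :: "(nat \<Rightarrow> real) \<Rightarrow> real \<Rightarrow> nat \<Rightarrow> real poly" where
  "pp a b 0 = 1"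
| "pp a b (Suc 0) = [:- a 0, 1:]"
| "pp a b (Suc (Suc k)) = [:- a (Suc k), 1:] * pp a b (Suc k) - Polynomial.smult b (pp a b k)"

lemma pp_deg: "degree (pp a b k) = k \<and> coeff (pp a b k) k = 1"
proof (induction a b k rule: pp.induct)
  case (3 a b k)
  let ?A = "[:- a (Suc k), 1:] * pp a b (Suc k)"
  have dA: "degree ?A = Suc (Suc k)" using 3
    by (subst degree_mult_eq) auto
  have cA: "coeff ?A (Suc (Suc k)) = 1" using 3 dA
    using coeff_mult_degree_sum[of "[:- a (Suc k), 1:]" "pp a b (Suc k)"] by simp
  have dB: "degree (Polynomial.smult b (pp a b k)) < Suc (Suc k)" using 3
    using degree_smult_le[of b "pp a b k"] by simp
  have "degree (?A - Polynomial.smult b (pp a b k)) = Suc (Suc k)"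
  proof -
    have "degree (?A + - Polynomial.smult b (pp a b k)) = degree ?A"
      by (rule degree_add_eq_left) (use dA dB in simp)
    thus ?thesis using dA by simp
  qed
  moreover have "coeff (?A - Polynomial.smult b (pp a b k)) (Suc (Suc k)) = 1"
    using cA 3 by (simp add: coeff_eq_0)
  ultimately show ?case by simp
qed auto

lemma monic_minfty:
  fixes p :: "real poly"
  assumes "lead_coeff p = 1" "degree p = d"
  shows "\<exists>m. \<forall>x\<le>m. (-1)^d * poly p x > 0"
proof -
  let ?q = "Polynomial.smult ((-1)^d) (pcompose p [:0,-1:])"
  have "lead_coeff (pcompose p [:0,-1:]) = lead_coeff p * (-1)^d"
    using assms by (subst lead_coeff_comp) auto
  hence "lead_coeff ?q = 1" using assms
    by (simp add: power_mult_distrib[symmetric])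
  then obtain N where N: "\<forall>x\<ge>N. poly ?q x \<ge> 1"
    using poly_pinfty_gt_lc[of ?q] by auto
  show ?thesis
  proof (intro exI allI impI)
    fix x :: real assume "x \<le> - N"
    hence "poly ?q (-x) \<ge> 1" using N by auto
    thus "(-1)^d * poly p x > 0" by (simp add: poly_pcompose)
  qed
qed

lemma monic_pinfty:
  fixes p :: "real poly"
  assumes "lead_coeff p = 1"
  shows "\<exists>m. \<forall>x\<ge>m. poly p x > 0"
proof -
  obtain m where "\<forall>x\<ge>m. poly p x \<ge> lead_coeff p" using poly_pinfty_gt_lc[of p] assms by auto
  thus ?thesis using assms by (intro exI[of _ m]) auto
qed

lemma chain_facts:
  fixes r z :: "nat \<Rightarrow> real"
  assumes C: "\<forall>i\<le>m. z i < r i \<and> r i < z (Suc i)"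
  shows "i < j \<Longrightarrow> j \<le> Suc m \<Longrightarrow> r i < z j"
    and "j \<le> i \<Longrightarrow> i \<le> m \<Longrightarrow> z j < r i"
    and "i < j \<Longrightarrow> j \<le> m \<Longrightarrow> r i < r j"
proof -
  show a: "r i < z j" if "i < j" "j \<le> Suc m" for i j
    using that
  proof (induction j)
    case (Suc j)
    show ?case
    proof (cases "i = j")
      case True then show ?thesis using C Suc by auto
    next
      case False
      hence "r i < z j" using Suc by auto
      also have "z j < z (Suc j)"
      proof -
        have "j \<le> m" using Suc.prems by simp
        thus ?thesis using C by force
      qed
      finally show ?thesis .
    qed
  qed simp
  show b: "z j < r i" if "j \<le> i" "i \<le> m" for i j
    using that
  proof (induction i)
    case 0 then show ?case using C by auto
  next
    case (Suc i)
    show ?case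
    proof (cases "j = Suc i")
      case True then show ?thesis using C Suc by auto
    next
      case False
      hence "z j < r i" using Suc by auto
      also have "r i < r (Suc i)"
      proof -
        have "i \<le> m" using Suc.prems by simp
        thus ?thesis using C[rule_format, of i] C[rule_format, of "Suc i"] Suc.prems by linarith
      qed
      finally show ?thesis .
    qed
  qed
  show "r i < r j" if "i < j" "j \<le> m" for i j
    using a[of i j] b[of j j] that by auto
qed

lemma roots_exact:
  fixes p :: "real poly" and r :: "nat \<Rightarrow> real"
  assumes "degree p = Suc m" "\<forall>i\<le>m. poly p (r i) = 0"
    and "\<And>i j. i < j \<Longrightarrow> j \<le> m \<Longrightarrow> r i < r j"
  shows "{x. poly p x = 0} = r ` {..m}" "card {x. poly p x = 0} = Suc m"
proof -
  have p0: "p \<noteq> 0" using assms(1) by auto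
  have inj: "inj_on r {..m}"
  proof (intro inj_onI)
    fix i j assume ij: "i \<in> {..m}" "j \<in> {..m}" "r i = r j"
    show "i = j"
      by (cases i j rule: linorder_cases) (use ij assms(3)[of i j] assms(3)[of j i] in auto)
  qed
  have cardr: "card (r ` {..m}) = Suc m" using card_image[OF inj] by simp
  have sub: "r ` {..m} \<subseteq> {x. poly p x = 0}" using assms(2) by auto
  have "card {x. poly p x = 0} \<le> Suc m" using card_poly_roots_bound[OF p0] assms(1) by simp
  hence "r ` {..m} = {x. poly p x = 0}"
    using card_subset_eq[OF poly_roots_finite[OF p0] sub] card_mono[OF poly_roots_finite[OF p0] sub] cardr
    by simp
  thus "{x. poly p x = 0} = r ` {..m}" by simp
  thus "card {x. poly p x = 0} = Suc m" using cardr by simp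
qed

lemma poly_same_sign:
  fixes p :: "real poly"
  assumes noroot: "\<And>w. R w \<Longrightarrow> poly p w \<noteq> 0"
    and conv: "\<And>x y w. R x \<Longrightarrow> R y \<Longrightarrow> x \<le> w \<Longrightarrow> w \<le> y \<Longrightarrow> R w"
    and "R x" "R y"
  shows "poly p x * poly p y > 0"
proof -
  have main: "poly p x * poly p y > 0" if "R x" "R y" "x \<le> y" for x y
  proof (rule ccontr)
    assume "\<not> ?thesis"
    hence le: "poly p x * poly p y \<le> 0" by simp
    have nx: "poly p x \<noteq> 0" "poly p y \<noteq> 0" using noroot that by auto
    hence lt: "poly p x * poly p y < 0" using le by (simp add: order_le_less)
    have "x \<noteq> y"
    proof
      assume "x = y" with lt show False by (simp add: not_square_less_zero)
    qed
    hence "x < y" using that(3) by simp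
    then obtain w where "x < w" "w < y" "poly p w = 0" using poly_IVT[OF _ lt] by auto
    thus False using conv[OF that(1,2), of w] noroot[of w] by linarith
  qed
  show ?thesis
  proof (cases "x \<le> y")
    case True then show ?thesis using main[of x y] assms(3,4) by blast
  next
    case False then show ?thesis using main[of y x] assms(3,4) by (simp add: mult.commute)
  qed
qed
lemma pp_SS_at_root:
  "poly (pp a b (Suc m)) x = 0 \<Longrightarrow> poly (pp a b (Suc (Suc m))) x = - b * poly (pp a b m) x"
  by simp

lemma interlace:
  assumes b: "b > 0"
  shows "\<exists>r z. (\<forall>i\<le>m. z i < r i \<and> r i < z (Suc i))
     \<and> (\<forall>i\<le>m. poly (pp a b (Suc m)) (r i) = 0)
     \<and> (\<forall>i\<le>Suc m. (-1)^(Suc m - i) * poly (pp a b (Suc m)) (z i) > 0)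
     \<and> (\<forall>i\<le>m. (-1)^(m - i) * poly (pp a b m) (r i) > 0)"
proof (induction m)
  case 0
  show ?case
    by (rule exI[of _ "\<lambda>_. a 0"], rule exI[of _ "\<lambda>i. if i = 0 then a 0 - 1 else a 0 + 1"]) auto
next
  case (Suc m)
  then obtain r z where C: "\<forall>i\<le>m. z i < r i \<and> r i < z (Suc i)"
    and R: "\<forall>i\<le>m. poly (pp a b (Suc m)) (r i) = 0"
    and Z: "\<forall>i\<le>Suc m. (-1)^(Suc m - i) * poly (pp a b (Suc m)) (z i) > 0"
    and S: "\<forall>i\<le>m. (-1)^(m - i) * poly (pp a b m) (r i) > 0"
    by blast
  define P where "P = pp a b (Suc m)"
  define N where "N = pp a b (Suc (Suc m))"
  note cf = chain_facts[OF C]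
  have degP: "degree P = Suc m" "lead_coeff P = 1" using pp_deg[of a b "Suc m"] by (auto simp: P_def)
  have degN: "degree N = Suc (Suc m)" "lead_coeff N = 1" using pp_deg[of a b "Suc (Suc m)"] by (auto simp: N_def)
  have rootsP: "{x. poly P x = 0} = r ` {..m}"
    using roots_exact(1)[OF degP(1)] R cf(3) unfolding P_def by blast
  have Nr: "(-1)^(Suc (Suc m) - Suc i) * poly N (r i) > 0" if "i \<le> m" for i
  proof -
    have "poly N (r i) = - b * poly (pp a b m) (r i)"
      using R that unfolding N_def by simp
    moreover have "Suc (Suc m) - Suc i = Suc (m - i)" using that by simp
    moreover have h: "0 < (-1)^(m-i) * poly (pp a b m) (r i)" using S that by blast
    have "0 < b * ((-1)^(m-i) * poly (pp a b m) (r i))" by (rule mult_pos_pos[OF b h])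
    ultimately show ?thesis by (simp add: algebra_simps)
  qed
  obtain U where U: "\<forall>x\<ge>U. poly N x > 0" using monic_pinfty[OF degN(2)] by blast
  obtain L where L: "\<forall>x\<le>L. (-1)^(Suc (Suc m)) * poly N x > 0"
    using monic_minfty[OF degN(2,1)] by blast
  define U' where "U' = max U (r m + 1)"
  define L' where "L' = min L (r 0 - 1)"
  define z' where "z' = (\<lambda>j. if j = 0 then L' else if j \<le> Suc m then r (j - 1) else U')"
  have Z': "(-1)^(Suc (Suc m) - j) * poly N (z' j) > 0" if jb: "j \<le> Suc (Suc m)" for j
  proof -
    consider "j = 0" | "0 < j" "j \<le> Suc m" | "j = Suc (Suc m)" using jb by (auto simp: le_Suc_eq)
    then show ?thesis
    proof cases
      case 1 then show ?thesis using L by (simp add: z'_def L'_def)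
    next
      case 2
      then obtain i where "j = Suc i" "i \<le> m" by (metis Suc_le_mono gr0_implies_Suc)
      then show ?thesis using Nr[of i] by (simp add: z'_def)
    next
      case 3 then show ?thesis using U by (simp add: z'_def U'_def)
    qed
  qed
  have z'mono: "z' j < z' (Suc j)" if jb: "j \<le> Suc m" for j
  proof -
    consider "j = 0" | "0 < j" "j \<le> m" | "j = Suc m" using jb by (auto simp: le_Suc_eq)
    then show ?thesis
    proof cases
      case 1 then show ?thesis by (simp add: z'_def L'_def)
    next
      case 2
      then obtain i where "j = Suc i" "i < m" by (metis Suc_le_eq gr0_implies_Suc Suc_less_eq)
      then show ?thesis using cf(3)[of i "Suc i"] by (simp add: z'_def)
    next
      case 3 then show ?thesis by (simp add: z'_def U'_def)
    qed
  qed
  have ex: "\<exists>s. z' j < s \<and> s < z' (Suc j) \<and> poly N s = 0" if "j \<le> Suc m" for j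
  proof -
    have h1: "(-1)^(Suc (Suc m) - j) * poly N (z' j) > 0" using Z'[of j] that by simp
    have h2: "(-1)^(Suc (Suc m) - Suc j) * poly N (z' (Suc j)) > 0" using Z'[of "Suc j"] that by simp
    have e: "Suc (Suc m) - j = Suc (Suc (Suc m) - Suc j)" using that by simp
    define c :: real where "c = (-1)^(Suc (Suc m) - Suc j)"
    have cc: "c * c = 1" unfolding c_def by (simp add: power_mult_distrib[symmetric])
    have h1': "- c * poly N (z' j) > 0" using h1 unfolding e c_def by simp
    have h2': "c * poly N (z' (Suc j)) > 0" using h2 unfolding c_def by simp
    have A: "c * poly N (z' j) < 0" using h1' by simp
    have "(c * poly N (z' j)) * (c * poly N (z' (Suc j))) < 0" using mult_neg_pos[OF A h2'] .
    moreover have "(c * poly N (z' j)) * (c * poly N (z' (Suc j))) = (c*c) * (poly N (z' j) * poly N (z' (Suc j)))"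
      by (simp add: algebra_simps)
    moreover have "(c*c) * (poly N (z' j) * poly N (z' (Suc j))) = poly N (z' j) * poly N (z' (Suc j))" by (simp add: cc)
    ultimately have "poly N (z' j) * poly N (z' (Suc j)) < 0" by simp
    thus ?thesis using poly_IVT[OF z'mono[OF that]] by blast
  qed
  obtain s where s: "\<And>j. j \<le> Suc m \<Longrightarrow> z' j < s j \<and> s j < z' (Suc j) \<and> poly N (s j) = 0"
    using ex by metis
  define reg where "reg = (\<lambda>j x. \<forall>i\<le>m. (i < j \<longrightarrow> r i < x) \<and> (j \<le> i \<longrightarrow> x < r i))"
  have sP: "(-1)^(Suc m - j) * poly P (s j) > 0" if j: "j \<le> Suc m" for j
  proof -
    have noroot: "poly P w \<noteq> 0" if "reg j w" for w
    proof
      assume "poly P w = 0"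
      then obtain i where "i \<le> m" "w = r i" using rootsP by auto
      thus False using that unfolding reg_def by (cases "i < j") auto
    qed
    have conv: "reg j w" if "reg j x" "reg j y" "x \<le> w" "w \<le> y" for x y w
      using that unfolding reg_def by force
    have rz: "reg j (z j)" unfolding reg_def using cf(1)[of _ j] cf(2)[of j] j by auto
    have rs: "reg j (s j)" unfolding reg_def
    proof (intro allI impI conjI)
      fix i assume i: "i \<le> m"
      show "r i < s j" if "i < j"
      proof -
        have "r i \<le> r (j - 1)"
        proof (cases "i = j - 1")
          case False
          hence "i < j - 1" "j - 1 \<le> m" using that j by auto
          thus ?thesis using cf(3)[of i "j - 1"] by simp
        qed simp
        also have "r (j - 1) = z' j" using that j by (simp add: z'_def)
        also have "z' j < s j" using s[OF j] by simp
        finally show ?thesis .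
      qed
      show "s j < r i" if "j \<le> i"
      proof -
        have "s j < z' (Suc j)" using s[OF j] by simp
        also have "z' (Suc j) = r j" using that i by (simp add: z'_def)
        also have "r j \<le> r i"
        proof (cases "i = j")
          case False
          hence "j < i" using that by auto
          thus ?thesis using cf(3)[of j i] i by simp
        qed simp
        finally show ?thesis .
      qed
    qed
    have prod: "poly P (s j) * poly P (z j) > 0"
      using poly_same_sign[where R="reg j" and p=P, OF noroot conv rs rz] .
    have zz: "(-1)^(Suc m - j) * poly P (z j) > 0" using Z j unfolding P_def by blast
    define c :: real where "c = (-1)^(Suc m - j)"
    have cc: "c * c = 1" unfolding c_def by (simp add: power_mult_distrib[symmetric])
    have "(c * poly P (s j)) * (c * poly P (z j)) = (c*c) * (poly P (s j) * poly P (z j))"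
      by (simp add: algebra_simps)
    also have "\<dots> = poly P (s j) * poly P (z j)" by (simp add: cc)
    finally have eqc: "(c * poly P (s j)) * (c * poly P (z j)) = poly P (s j) * poly P (z j)" .
    have "(c * poly P (s j)) * (c * poly P (z j)) > 0" unfolding eqc by (rule prod)
    hence "c * poly P (s j) > 0" using zz unfolding c_def
      by (metis zero_less_mult_pos2)
    thus ?thesis unfolding c_def .
  qed
  show ?case
    apply (rule exI[of _ s], rule exI[of _ z'])
    using s Z' sP unfolding N_def P_def by (auto simp del: pp.simps)
qed

lemma pp_roots_card:
  assumes "b > 0"
  shows "card {x. poly (pp a b (Suc m)) x = 0} = Suc m"
proof -
  obtain r z where C: "\<forall>i\<le>m. z i < r i \<and> r i < z (Suc i)"
    and R: "\<forall>i\<le>m. poly (pp a b (Suc m)) (r i) = 0"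
    using interlace[OF assms, of m a] by blast
  show ?thesis
    using roots_exact(2)[OF conjunct1[OF pp_deg[of a b "Suc m"]] R] chain_facts(3)[OF C] by blast
qed



definition av :: "nat \<Rightarrow> real \<Rightarrow> nat \<Rightarrow> real" where
  "av n \<rho> j = (if j = 0 \<or> j = n - 1 then 1 else 1 + \<rho>^2)"

definition tri :: "nat \<Rightarrow> real \<Rightarrow> real mat" where
  "tri n \<rho> = mat n n (\<lambda>(j, l). if l = j then av n \<rho> j else if l + 1 = j \<or> l = j + 1 then - \<rho> else 0)"

definition rsum :: "nat \<Rightarrow> real \<Rightarrow> (nat \<Rightarrow> real) \<Rightarrow> nat \<Rightarrow> real" where
  "rsum n \<rho> f j = (if 0 < j then - \<rho> * f (j - 1) else 0) + av n \<rho> j * f j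
     + (if j + 1 < n then - \<rho> * f (j + 1) else 0)"

lemma tri_row:
  assumes j: "j < n"
  shows "(\<Sum>l\<in>{0..<n}. tri n \<rho> $$ (j, l) * f l) = rsum n \<rho> f j"
proof -
  have "(\<Sum>l\<in>{0..<n}. tri n \<rho> $$ (j, l) * f l) =
        (\<Sum>l\<in>{0..<n}. (if l = j then av n \<rho> j * f l else 0)
           + (if l = j - 1 \<and> 0 < j then - \<rho> * f l else 0)
           + (if l = j + 1 then - \<rho> * f l else 0))"
    using j by (intro sum.cong) (auto simp: tri_def)
  also have "\<dots> = rsum n \<rho> f j"
    using j by (simp add: sum.distrib rsum_def)
  finally show ?thesis .
qed

lemma smult_mat_vec: "A \<in> carrier_mat n m \<Longrightarrow> v \<in> carrier_vec m \<Longrightarrow>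
   (k \<cdot>\<^sub>m A) *\<^sub>v v = k \<cdot>\<^sub>v (A *\<^sub>v v)"
  by (intro eq_vecI) (auto simp: scalar_prod_def sum_distrib_left ac_simps)

lemma rsum_K:
  assumes n: "2 \<le> n" and j: "j < n" and k: "k < n"
  shows "rsum n \<rho> (\<lambda>l. \<rho> ^ (if l \<le> k then k - l else l - k)) j = (if j = k then 1 - \<rho>^2 else 0)"
proof (cases k j rule: linorder_cases)
  case less
  then obtain e where e: "j = k + e + 1" by (metis add.commute less_imp_Suc_add Suc_eq_plus1 add.left_commute)
  show ?thesis
  proof (cases "j + 1 < n")
    case True
    hence "av n \<rho> j = 1 + \<rho>^2" using e by (simp add: av_def)
    thus ?thesis using True e by (simp add: rsum_def power_add algebra_simps power2_eq_square)
  next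
    case False
    hence "j = n - 1" using j by simp
    hence "av n \<rho> j = 1" by (simp add: av_def)
    thus ?thesis using False e by (simp add: rsum_def power_add algebra_simps)
  qed
next
  case equal
  consider "j = 0" | "j = n - 1" | "0 < j" "j + 1 < n" using j by linarith
  thus ?thesis
  proof cases
    case 1 thus ?thesis using equal n by (simp add: rsum_def av_def power2_eq_square)
  next
    case 2 thus ?thesis using equal n by (simp add: rsum_def av_def power2_eq_square)
  next
    case 3 thus ?thesis using equal n by (simp add: rsum_def av_def power2_eq_square)
  qed
next
  case greater
  then obtain e where e: "k = j + e + 1" by (metis add.commute less_imp_Suc_add Suc_eq_plus1 add.left_commute)
  show ?thesis
  proof (cases "0 < j")
    case True
    hence "av n \<rho> j = 1 + \<rho>^2" using e k by (simp add: av_def)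
    moreover have "j - 1 \<le> k" "k - (j - 1) = e + 2" using True e by auto
    ultimately show ?thesis using True e k by (simp add: rsum_def power_add algebra_simps power2_eq_square)
  next
    case False
    hence "av n \<rho> j = 1" by (simp add: av_def)
    thus ?thesis using False e k by (simp add: rsum_def power_add algebra_simps)
  qed
qed

lemma dim_tri[simp]: "dim_row (tri n \<rho>) = n" "dim_col (tri n \<rho>) = n" by (auto simp: tri_def)
lemma dim_kms[simp]: "dim_row (kms_matrix n \<rho>) = n" "dim_col (kms_matrix n \<rho>) = n" by (auto simp: kms_matrix_def)
lemma tri_carrier[simp]: "tri n \<rho> \<in> carrier_mat n n" by (simp add: tri_def)
lemma kms_carrier[simp]: "kms_matrix n \<rho> \<in> carrier_mat n n" by (simp add: kms_matrix_def)

lemma tri_K: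
  assumes n: "2 \<le> n"
  shows "tri n \<rho> * kms_matrix n \<rho> = (1 - \<rho>^2) \<cdot>\<^sub>m 1\<^sub>m n"
proof (rule eq_matI)
  fix j k assume j: "j < dim_row ((1 - \<rho>^2) \<cdot>\<^sub>m 1\<^sub>m n)" and k: "k < dim_col ((1 - \<rho>^2) \<cdot>\<^sub>m 1\<^sub>m n)"
  hence j': "j < n" and k': "k < n" by auto
  have "(tri n \<rho> * kms_matrix n \<rho>) $$ (j, k) = (\<Sum>l\<in>{0..<n}. tri n \<rho> $$ (j, l) * (\<lambda>l. \<rho> ^ (if l \<le> k then k - l else l - k)) l)"
    using j' k' by (auto simp: scalar_prod_def kms_matrix_def tri_def intro!: sum.cong)
  also have "\<dots> = (if j = k then 1 - \<rho>^2 else 0)"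
    using tri_row[OF j'] rsum_K[OF n j' k'] by simp
  finally show "(tri n \<rho> * kms_matrix n \<rho>) $$ (j, k) = ((1 - \<rho>^2) \<cdot>\<^sub>m 1\<^sub>m n) $$ (j, k)"
    using j' k' by simp
qed (auto simp: tri_def kms_matrix_def)

lemma smult_smult_mat: "a \<cdot>\<^sub>m (b \<cdot>\<^sub>m A) = (a * b) \<cdot>\<^sub>m (A :: real mat)"
  by (intro eq_matI) auto

lemma one_smult_mat[simp]: "(1::real) \<cdot>\<^sub>m A = A"
  by (intro eq_matI) auto

lemma K_tri:
  assumes n: "2 \<le> n" and c: "1 - \<rho>^2 \<noteq> 0"
  shows "kms_matrix n \<rho> * tri n \<rho> = (1 - \<rho>^2) \<cdot>\<^sub>m 1\<^sub>m n"
proof -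
  let ?c = "1 - \<rho>^2"
  let ?K = "kms_matrix n \<rho>" and ?T = "tri n \<rho>"
  have "((1 / ?c) \<cdot>\<^sub>m ?T) * ?K = (1 / ?c) \<cdot>\<^sub>m (?T * ?K)"
    by (rule mult_smult_assoc_mat[of _ n n _ n]) auto
  also have "\<dots> = (1 / ?c) \<cdot>\<^sub>m (?c \<cdot>\<^sub>m 1\<^sub>m n)" by (simp only: tri_K[OF n])
  also have "\<dots> = ((1 / ?c) * ?c) \<cdot>\<^sub>m 1\<^sub>m n" by (rule smult_smult_mat)
  finally have e1: "((1 / ?c) \<cdot>\<^sub>m ?T) * ?K = ((1 / ?c) * ?c) \<cdot>\<^sub>m 1\<^sub>m n" .
  have "(1 / ?c) * ?c = 1" using c by simp
  hence e2: "((1 / ?c) \<cdot>\<^sub>m ?T) * ?K = 1\<^sub>m n" using e1 by (simp only: one_smult_mat)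
  have inv: "?K * ((1 / ?c) \<cdot>\<^sub>m ?T) = 1\<^sub>m n"
    by (rule mat_mult_left_right_inverse[OF _ _ e2]) simp_all
  have "?K * ?T = ?K * ((?c * (1 / ?c)) \<cdot>\<^sub>m ?T)" using c by simp
  also have "\<dots> = ?K * (?c \<cdot>\<^sub>m ((1 / ?c) \<cdot>\<^sub>m ?T))" by (simp only: smult_smult_mat)
  also have "\<dots> = ?c \<cdot>\<^sub>m (?K * ((1 / ?c) \<cdot>\<^sub>m ?T))"
    by (rule mult_smult_distrib[of _ n n _ n]) auto
  also have "\<dots> = ?c \<cdot>\<^sub>m 1\<^sub>m n" by (simp only: inv)
  finally show ?thesis .
qed


definition uu :: "nat \<Rightarrow> real \<Rightarrow> real \<Rightarrow> nat \<Rightarrow> real" where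
  "uu n \<rho> \<mu> j = poly (pp (av n \<rho>) (\<rho>^2) j) \<mu> / (- \<rho>)^j"

lemma uu_rec:
  assumes "\<rho> \<noteq> 0"
  shows "\<rho> * uu n \<rho> \<mu> (Suc j) = (av n \<rho> j - \<mu>) * uu n \<rho> \<mu> j - (if 0 < j then \<rho> * uu n \<rho> \<mu> (j - 1) else 0)"
proof (cases j)
  case 0 thus ?thesis using assms by (simp add: uu_def)
next
  case (Suc i)
  define D where "D = (- \<rho>)^i"
  have D: "D \<noteq> 0" using assms by (simp add: D_def)
  have e1: "(- \<rho>)^(Suc (Suc i)) = \<rho>^2 * D" by (simp add: D_def power2_eq_square)
  have e2: "(- \<rho>)^(Suc i) = - \<rho> * D" by (simp add: D_def)
  define P0 where "P0 = poly (pp (av n \<rho>) (\<rho>^2) i) \<mu>"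
  define P1 where "P1 = poly (pp (av n \<rho>) (\<rho>^2) (Suc i)) \<mu>"
  have P2: "poly (pp (av n \<rho>) (\<rho>^2) (Suc (Suc i))) \<mu> = (\<mu> - av n \<rho> (Suc i)) * P1 - \<rho>^2 * P0"
    by (simp add: P0_def P1_def algebra_simps)
  have "\<rho> * ((\<mu> - av n \<rho> (Suc i)) * P1 - \<rho>^2 * P0) / (\<rho>^2 * D)
        = (av n \<rho> (Suc i) - \<mu>) * (P1 / (- \<rho> * D)) - \<rho> * (P0 / D)"
    using D assms by (simp add: field_simps power2_eq_square)
  thus ?thesis unfolding uu_def Suc e1 e2 P2 using P0_def P1_def D_def by simp
qed

lemma mv_tri:
  assumes "v \<in> carrier_vec n" "j < n"
  shows "(tri n \<rho> *\<^sub>v v) $ j = rsum n \<rho> (\<lambda>l. v $ l) j"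
proof -
  have "(tri n \<rho> *\<^sub>v v) $ j = row (tri n \<rho>) j \<bullet> v" using assms by simp
  also have "\<dots> = (\<Sum>l\<in>{0..<n}. tri n \<rho> $$ (j, l) * v $ l)"
    using assms unfolding scalar_prod_def by (intro sum.cong) auto
  finally have "(tri n \<rho> *\<^sub>v v) $ j = (\<Sum>l\<in>{0..<n}. tri n \<rho> $$ (j, l) * v $ l)" .
  thus ?thesis using tri_row[OF assms(2)] by simp
qed

lemma uu0[simp]: "uu n \<rho> \<mu> 0 = 1" by (simp add: uu_def)

lemma eig_tri:
  assumes n: "2 \<le> n" and r: "\<rho> \<noteq> 0"
  shows "eigenvalue (tri n \<rho>) \<mu> \<longleftrightarrow> poly (pp (av n \<rho>) (\<rho>^2) n) \<mu> = 0"
proof -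
  let ?u = "uu n \<rho> \<mu>"
  define m where "m = n - 2"
  have m: "n = Suc (Suc m)" using n by (simp add: m_def)
  have rootiff: "poly (pp (av n \<rho>) (\<rho>^2) n) \<mu> = 0 \<longleftrightarrow> ?u n = 0"
    using r by (simp add: uu_def)
  have rec: "\<rho> * ?u (Suc j) = (av n \<rho> j - \<mu>) * ?u j - (if 0 < j then \<rho> * ?u (j - 1) else 0)" for j
    by (rule uu_rec[OF r])
  show ?thesis
  proof
    assume "eigenvalue (tri n \<rho>) \<mu>"
    then obtain v where v: "v \<in> carrier_vec n" "v \<noteq> 0\<^sub>v n" "tri n \<rho> *\<^sub>v v = \<mu> \<cdot>\<^sub>v v"
      unfolding eigenvalue_def eigenvector_def by auto
    have row: "rsum n \<rho> (\<lambda>l. v $ l) j = \<mu> * v $ j" if "j < n" for j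
    proof -
      have "(tri n \<rho> *\<^sub>v v) $ j = (\<mu> \<cdot>\<^sub>v v) $ j" using v(3) by simp
      thus ?thesis using mv_tri[OF v(1) that] that v(1) by simp
    qed
    have claim: "j < n \<longrightarrow> v $ j = v $ 0 * ?u j" for j
    proof (induction j rule: less_induct)
      case (less j)
      show ?case
      proof (cases j)
        case 0 thus ?thesis by simp
      next
        case (Suc i)
        show ?thesis
        proof
          assume jn: "j < n"
          have ri: "rsum n \<rho> (\<lambda>l. v $ l) i = \<mu> * v $ i" using row[of i] jn Suc by simp
          have IHi: "v $ i = v $ 0 * ?u i" using less.IH[of i] Suc jn by simp
          have IHi1: "0 < i \<Longrightarrow> v $ (i - 1) = v $ 0 * ?u (i - 1)"
          proof -
            assume "0 < i"
            hence "i - 1 < j" "i - 1 < n" using Suc jn by auto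
            thus ?thesis using less.IH[of "i - 1"] by blast
          qed
          have "\<rho> * v $ (Suc i) = (av n \<rho> i - \<mu>) * v $ i - (if 0 < i then \<rho> * v $ (i - 1) else 0)"
            using ri jn Suc by (cases "0 < i") (auto simp: rsum_def algebra_simps)
          also have "\<dots> = v $ 0 * ((av n \<rho> i - \<mu>) * ?u i - (if 0 < i then \<rho> * ?u (i - 1) else 0))"
            using IHi IHi1 by (simp add: algebra_simps)
          also have "\<dots> = v $ 0 * (\<rho> * ?u (Suc i))" using rec[of i] by simp
          finally have "\<rho> * v $ (Suc i) = \<rho> * (v $ 0 * ?u (Suc i))" by simp
          thus "v $ j = v $ 0 * ?u j" using r Suc by simp
        qed
      qed
    qed
    have v0: "v $ 0 \<noteq> 0"
    proof
      assume "v $ 0 = 0"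
      have "v = 0\<^sub>v n"
      proof (rule eq_vecI)
        fix i assume "i < dim_vec (0\<^sub>v n :: real vec)"
        hence "i < n" by simp
        hence "v $ i = v $ 0 * ?u i" using claim[of i] by blast
        thus "v $ i = 0\<^sub>v n $ i" using \<open>v $ 0 = 0\<close> \<open>i < n\<close> by simp
      qed (use v(1) in simp)
      thus False using v(2) by simp
    qed
    have rl: "rsum n \<rho> (\<lambda>l. v $ l) (Suc m) = \<mu> * v $ (Suc m)" using row[of "Suc m"] m by simp
    hence "- \<rho> * v $ m + av n \<rho> (Suc m) * v $ (Suc m) = \<mu> * v $ (Suc m)"
      using m by (simp add: rsum_def)
    hence "v $ 0 * ((av n \<rho> (Suc m) - \<mu>) * ?u (Suc m) - \<rho> * ?u m) = 0"
    proof -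
      have c1: "v $ m = v $ 0 * ?u m" using claim[of m] m by simp
      have c2: "v $ Suc m = v $ 0 * ?u (Suc m)" using claim[of "Suc m"] m by simp
      show ?thesis using \<open>- \<rho> * v $ m + av n \<rho> (Suc m) * v $ (Suc m) = \<mu> * v $ (Suc m)\<close>
        unfolding c1 c2 by (simp add: algebra_simps)
    qed
    hence "v $ 0 * (\<rho> * ?u n) = 0" using rec[of "Suc m"] m by simp
    hence "?u n = 0" using v0 r by simp
    thus "poly (pp (av n \<rho>) (\<rho>^2) n) \<mu> = 0" using rootiff by simp
  next
    assume "poly (pp (av n \<rho>) (\<rho>^2) n) \<mu> = 0"
    hence un: "?u n = 0" using rootiff by simp
    let ?v = "vec n ?u"
    have "?v \<noteq> 0\<^sub>v n"
    proof
      assume "?v = 0\<^sub>v n"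
      hence "?v $ 0 = 0\<^sub>v n $ 0" by simp
      thus False using m by simp
    qed
    moreover have "tri n \<rho> *\<^sub>v ?v = \<mu> \<cdot>\<^sub>v ?v"
    proof (rule eq_vecI)
      fix j assume "j < dim_vec (\<mu> \<cdot>\<^sub>v ?v)"
      hence j: "j < n" by simp
      have "(tri n \<rho> *\<^sub>v ?v) $ j = rsum n \<rho> (\<lambda>l. ?v $ l) j" by (rule mv_tri[OF _ j]) simp
      also have "\<dots> = rsum n \<rho> ?u j" using j by (simp add: rsum_def)
      also have "\<dots> = \<mu> * ?u j"
      proof (cases "j + 1 < n")
        case True
        thus ?thesis using rec[of j] by (cases "0 < j") (auto simp: rsum_def algebra_simps)
      next
        case False
        hence "Suc j = n" using j by simp
        hence "?u (Suc j) = 0" using un by simp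
        thus ?thesis using rec[of j] False by (cases "0 < j") (auto simp: rsum_def algebra_simps)
      qed
      finally show "(tri n \<rho> *\<^sub>v ?v) $ j = (\<mu> \<cdot>\<^sub>v ?v) $ j" using j by simp
    qed simp
    ultimately show "eigenvalue (tri n \<rho>) \<mu>"
      unfolding eigenvalue_def eigenvector_def by (intro exI[of _ ?v]) auto
  qed
qed

lemma scaled_id_mv: "v \<in> carrier_vec n \<Longrightarrow> (c \<cdot>\<^sub>m 1\<^sub>m n) *\<^sub>v v = (c::real) \<cdot>\<^sub>v v"
  using smult_mat_vec[of "1\<^sub>m n" n n v c] by simp

lemma vec_scale_cancel:
  fixes v w :: "real vec"
  assumes "v \<in> carrier_vec n" "w \<in> carrier_vec n" "e \<cdot>\<^sub>v w = c \<cdot>\<^sub>v v" "e \<noteq> 0"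
  shows "w = (c / e) \<cdot>\<^sub>v v"
proof (rule eq_vecI)
  fix i assume "i < dim_vec ((c / e) \<cdot>\<^sub>v v)"
  hence i: "i < n" using assms by simp
  have "(e \<cdot>\<^sub>v w) $ i = (c \<cdot>\<^sub>v v) $ i" using assms(3) by simp
  hence "e * w $ i = c * v $ i" using i assms(1,2) by simp
  thus "w $ i = ((c / e) \<cdot>\<^sub>v v) $ i" using i assms by (simp add: field_simps)
qed (use assms in simp)

lemma vec_scale_zero:
  fixes v :: "real vec"
  assumes "v \<in> carrier_vec n" "c \<cdot>\<^sub>v v = 0\<^sub>v n" "c \<noteq> 0"
  shows "v = 0\<^sub>v n"
proof (rule eq_vecI)
  fix i assume "i < dim_vec (0\<^sub>v n :: real vec)"
  hence i: "i < n" by simp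
  have d: "dim_vec v = n" using assms(1) by simp
  have "(c \<cdot>\<^sub>v v) $ i = (0\<^sub>v n :: real vec) $ i" using assms(2) by simp
  hence "c * v $ i = 0" using i d by simp
  thus "v $ i = (0\<^sub>v n :: real vec) $ i" using i assms(3) by simp
qed (use assms in simp)

lemma zero_smult_v: "w \<in> carrier_vec n \<Longrightarrow> (0::real) \<cdot>\<^sub>v w = 0\<^sub>v n"
  by (intro eq_vecI) auto

lemma eigK:
  assumes n: "2 \<le> n" and c: "1 - \<rho>^2 \<noteq> 0"
  shows "eigenvalue (kms_matrix n \<rho>) e \<longleftrightarrow> e \<noteq> 0 \<and> eigenvalue (tri n \<rho>) ((1 - \<rho>^2) / e)"
proof -
  let ?c = "1 - \<rho>^2" and ?K = "kms_matrix n \<rho>" and ?T = "tri n \<rho>"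
  show ?thesis
  proof
    assume "eigenvalue ?K e"
    then obtain v where v: "v \<in> carrier_vec n" "v \<noteq> 0\<^sub>v n" "?K *\<^sub>v v = e \<cdot>\<^sub>v v"
      unfolding eigenvalue_def eigenvector_def by auto
    have "?c \<cdot>\<^sub>v v = (?T * ?K) *\<^sub>v v" using tri_K[OF n] scaled_id_mv[OF v(1)] by simp
    also have "\<dots> = ?T *\<^sub>v (?K *\<^sub>v v)" using v(1) by (simp add: assoc_mult_mat_vec[of _ n n _ n])
    also have "\<dots> = e \<cdot>\<^sub>v (?T *\<^sub>v v)" unfolding v(3) by (rule mult_mat_vec[of _ n n]) (use v(1) in auto)
    finally have eq: "e \<cdot>\<^sub>v (?T *\<^sub>v v) = ?c \<cdot>\<^sub>v v" by simp
    have e0: "e \<noteq> 0"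
    proof
      assume "e = 0"
      hence "?c \<cdot>\<^sub>v v = 0 \<cdot>\<^sub>v (?T *\<^sub>v v)" using eq by simp
      also have "\<dots> = 0\<^sub>v n" by (rule zero_smult_v, rule mult_mat_vec_carrier[of _ n n]) (use v(1) in auto)
      finally have "?c \<cdot>\<^sub>v v = 0\<^sub>v n" .
      thus False using vec_scale_zero[OF v(1) _ c] v(2) by simp
    qed
    have "?T *\<^sub>v v = (?c / e) \<cdot>\<^sub>v v"
      by (rule vec_scale_cancel[OF v(1) mult_mat_vec_carrier[OF tri_carrier v(1)] eq e0])
    thus "e \<noteq> 0 \<and> eigenvalue ?T (?c / e)" using e0 v(1,2)
      unfolding eigenvalue_def eigenvector_def by auto
  next
    assume "e \<noteq> 0 \<and> eigenvalue ?T (?c / e)"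
    then obtain v where e0: "e \<noteq> 0" and v: "v \<in> carrier_vec n" "v \<noteq> 0\<^sub>v n" "?T *\<^sub>v v = (?c / e) \<cdot>\<^sub>v v"
      unfolding eigenvalue_def eigenvector_def by auto
    have mu0: "?c / e \<noteq> 0" using c e0 by simp
    have "?c \<cdot>\<^sub>v v = (?K * ?T) *\<^sub>v v" using K_tri[OF n c] scaled_id_mv[OF v(1)] by simp
    also have "\<dots> = ?K *\<^sub>v (?T *\<^sub>v v)" using v(1) by (simp add: assoc_mult_mat_vec[of _ n n _ n])
    also have "\<dots> = (?c / e) \<cdot>\<^sub>v (?K *\<^sub>v v)" unfolding v(3) by (rule mult_mat_vec[of _ n n]) (use v(1) in auto)
    finally have eq: "(?c / e) \<cdot>\<^sub>v (?K *\<^sub>v v) = ?c \<cdot>\<^sub>v v" by simp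
    have "?K *\<^sub>v v = (?c / (?c / e)) \<cdot>\<^sub>v v"
      by (rule vec_scale_cancel[OF v(1) mult_mat_vec_carrier[OF kms_carrier v(1)] eq mu0])
    also have "?c / (?c / e) = e" using c e0 by simp
    finally show "eigenvalue ?K e" using v(1,2) unfolding eigenvalue_def eigenvector_def by auto
  qed
qed

lemma not_eig0:
  assumes n: "2 \<le> n" and c: "1 - \<rho>^2 \<noteq> 0"
  shows "\<not> eigenvalue (tri n \<rho>) 0"
proof
  let ?c = "1 - \<rho>^2" and ?K = "kms_matrix n \<rho>" and ?T = "tri n \<rho>"
  assume "eigenvalue ?T 0"
  then obtain v where v: "v \<in> carrier_vec n" "v \<noteq> 0\<^sub>v n" "?T *\<^sub>v v = 0 \<cdot>\<^sub>v v"
    unfolding eigenvalue_def eigenvector_def by auto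
  have "?c \<cdot>\<^sub>v v = (?K * ?T) *\<^sub>v v" using K_tri[OF n c] scaled_id_mv[OF v(1)] by simp
  also have "\<dots> = ?K *\<^sub>v (?T *\<^sub>v v)" using v(1) by (simp add: assoc_mult_mat_vec[of _ n n _ n])
  also have "\<dots> = 0 \<cdot>\<^sub>v (?K *\<^sub>v v)" unfolding v(3) by (rule mult_mat_vec[of _ n n]) (use v(1) in auto)
  also have "\<dots> = 0\<^sub>v n" by (rule zero_smult_v, rule mult_mat_vec_carrier[of _ n n]) (use v(1) in auto)
  finally have "?c \<cdot>\<^sub>v v = 0\<^sub>v n" .
  thus False using vec_scale_zero[OF v(1) _ c] v(2) by simp
qed

theorem proposition6p1:
  fixes n :: nat and \<rho> :: real
  assumes "n \<ge> 2" and "\<rho> \<notin> {-1, 0, 1}"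
  shows "card {e. eigenvalue (kms_matrix n \<rho>) e} = n"
proof -
  let ?c = "1 - \<rho>^2"
  have r0: "\<rho> \<noteq> 0" using assms(2) by auto
  have c: "?c \<noteq> 0" using assms(2) power2_eq_1_iff[of \<rho>] by auto
  let ?R = "{x. poly (pp (av n \<rho>) (\<rho>^2) n) x = 0}"
  have cardR: "card ?R = n"
  proof -
    have "n = Suc (n - 1)" using assms(1) by simp
    moreover have "\<rho>^2 > 0" using r0 by simp
    ultimately show ?thesis using pp_roots_card[of "\<rho>^2" "av n \<rho>" "n - 1"] by simp
  qed
  have R: "x \<in> ?R \<longleftrightarrow> eigenvalue (tri n \<rho>) x" for x
    using eig_tri[OF assms(1) r0] by simp
  have "{e. eigenvalue (kms_matrix n \<rho>) e} = (\<lambda>x. ?c / x) ` ?R"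
  proof (intro equalityI subsetI)
    fix e assume "e \<in> {e. eigenvalue (kms_matrix n \<rho>) e}"
    hence e: "e \<noteq> 0" "eigenvalue (tri n \<rho>) (?c / e)" using eigK[OF assms(1) c] by auto
    hence "?c / e \<in> ?R" using R by blast
    moreover have "e = ?c / (?c / e)" using c e by simp
    ultimately show "e \<in> (\<lambda>x. ?c / x) ` ?R" by blast
  next
    fix e assume "e \<in> (\<lambda>x. ?c / x) ` ?R"
    then obtain x where x: "x \<in> ?R" "e = ?c / x" by blast
    have ex: "eigenvalue (tri n \<rho>) x" using x(1) R by blast
    hence x0: "x \<noteq> 0" using not_eig0[OF assms(1) c] by auto
    have "e \<noteq> 0" using x0 c x(2) by simp
    moreover have "?c / e = x" using x(2) x0 c by simp
    ultimately show "e \<in> {e. eigenvalue (kms_matrix n \<rho>) e}" using eigK[OF assms(1) c] ex by simp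
  qed
  moreover have "inj_on (\<lambda>x. ?c / x) ?R"
    by (intro inj_onI) (use c in simp)
  ultimately show ?thesis using cardR card_image by metis
qed

end
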